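(* Let $\mathcal{S}_{\mathbb{R}}$ be the class of functions $f(z)=z+\sum_{n\ge2}a_nz^n$ in $\mathcal{S}$ all of whose coefficients $a_n$ are real. Then the harmonic analogue of $\mathcal{S}_{\mathbb{R}}$ is $\mathcal{S}_{\mathbb{R}}$ itself; that is, a harmonic function $f=h+\bar g$ ($h,g$ analytic in $\mathbb{D}$) satisfies $h+\epsilon g\in\mathcal{S}_{\mathbb{R}}$ for every $|\epsilon|=1$ if and only if $g\equiv0$ and $h\in\mathcal{S}_{\mathbb{R}}$.
   Context: $\mathbb{D}$ is the open unit disk. $\mathcal{S}$ is the class of analytic univalent functions $f$ in $\mathbb{D}$ with $f(0)=0$, $f'(0)=1$. For $\mathcal{G}\subset\mathcal{S}$, its harmonic analogue is the class of harmonic $f=h+\bar g$ ($h,g$ analytic in $\mathbb{D}$) such that $h+\epsilon g\in\mathcal{G}$ for every $\epsilon\in\mathbb{C}$ with $|\epsilon|=1$. *)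

theory Defs
  imports "HOL-Complex_Analysis.Complex_Analysis"
begin

definition class_S :: "(complex \<Rightarrow> complex) set" where
  "class_S = {f. f holomorphic_on ball 0 1 \<and> inj_on f (ball 0 1) \<and> f 0 = 0 \<and> deriv f 0 = 1}"

definition class_S_R :: "(complex \<Rightarrow> complex) set" where
  "class_S_R = {f. f \<in> class_S \<and> (\<forall>n. (deriv ^^ n) f 0 / fact n \<in> \<real>)}"

text \<open>Harmonic analogue of a class G, represented by pairs (h,g) with f = h + conj g.\<close>
definition harmonic_analogue :: "(complex \<Rightarrow> complex) set \<Rightarrow> ((complex \<Rightarrow> complex) \<times> (complex \<Rightarrow> complex)) set" where
  "harmonic_analogue G = {(h, g). h holomorphic_on ball 0 1 \<and> g holomorphic_on ball 0 1 \<and>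
      (\<forall>\<epsilon>::complex. norm \<epsilon> = 1 \<longrightarrow> (\<lambda>z. h z + \<epsilon> * g z) \<in> G)}"

end

theory Submission
  imports Defs
begin

lemma S_R_cong:
  assumes "\<And>z. z \<in> ball 0 1 \<Longrightarrow> p z = q z" "p \<in> class_S_R"
  shows "q \<in> class_S_R"
proof -
  have ev': "\<forall>\<^sub>F z in nhds (0::complex). p z = q z"
    using eventually_nhds_in_open[of "ball (0::complex) 1" 0] assms(1) by (auto elim!: eventually_mono)
  have hd: "\<And>n. (deriv ^^ n) p 0 = (deriv ^^ n) q 0"
    by (rule higher_deriv_cong_ev[OF ev' refl])
  have d: "deriv p 0 = deriv q 0" by (rule deriv_cong_ev[OF ev' refl])
  have "q holomorphic_on ball 0 1"
    using assms(2) holomorphic_cong[of "ball 0 1" "ball 0 1" p q] assms(1)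
    by (auto simp: class_S_R_def class_S_def)
  moreover have "inj_on q (ball 0 1)"
    using assms(2) inj_on_cong[of "ball 0 1" p q] assms(1)
    by (auto simp: class_S_R_def class_S_def)
  moreover have "q 0 = 0" using assms by (auto simp: class_S_R_def class_S_def)
  ultimately show ?thesis using assms(2) hd d by (auto simp: class_S_R_def class_S_def)
qed

theorem theorem3p10:
  fixes h g :: "complex \<Rightarrow> complex"
  assumes "h holomorphic_on ball 0 1" and "g holomorphic_on ball 0 1"
  shows "(h, g) \<in> harmonic_analogue class_S_R \<longleftrightarrow>
           ((\<forall>z\<in>ball 0 1. g z = 0) \<and> h \<in> class_S_R)"
proof
  assume H: "(h, g) \<in> harmonic_analogue class_S_R"
  have mem: "\<And>e. norm e = 1 \<Longrightarrow> (\<lambda>z. h z + e * g z) \<in> class_S_R"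
    using H by (auto simp: harmonic_analogue_def)
  have coef: "(deriv ^^ n) (\<lambda>z. h z + e * g z) 0 = (deriv ^^ n) h 0 + e * (deriv ^^ n) g 0" for n e
  proof -
    have "(\<lambda>z. e * g z) holomorphic_on ball 0 1" using assms(2) by (intro holomorphic_intros)
    then have "(deriv ^^ n) (\<lambda>z. h z + e * g z) 0 = (deriv ^^ n) h 0 + (deriv ^^ n) (\<lambda>z. e * g z) 0"
      using assms(1) by (intro higher_deriv_add) auto
    also have "(deriv ^^ n) (\<lambda>z. e * g z) 0 = e * (deriv ^^ n) g 0"
      using assms(2) by (intro higher_deriv_cmult) auto
    finally show ?thesis .
  qed
  have real: "((deriv ^^ n) h 0 + e * (deriv ^^ n) g 0) / fact n \<in> \<real>" if "norm e = 1" for n e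
    using mem[OF that] coef[of n e] unfolding class_S_R_def by (metis (no_types, lifting) mem_Collect_eq)
  have g0: "(deriv ^^ n) g 0 = 0" for n
  proof -
    define a where "a = (deriv ^^ n) h 0 / fact n"
    define b where "b = (deriv ^^ n) g 0 / fact n"
    have r: "a + e * b \<in> \<real>" if "norm e = 1" for e
      using real[OF that, of n] by (simp add: a_def b_def add_divide_distrib)
    have r1: "a + b \<in> \<real>" using r[of 1] by simp
    have r2: "a - b \<in> \<real>" using r[of "-1"] by simp
    have r3: "a + \<i> * b \<in> \<real>" using r[of \<i>] by simp
    have "Im a + Im b = 0" "Im a - Im b = 0" "Im a + Re b = 0"
      using r1 r2 r3 by (auto simp: complex_is_Real_iff)
    then have "Im b = 0" "Re b = 0" by auto
    then have "b = 0" by (simp add: complex_eq_iff)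
    then show ?thesis by (simp add: b_def)
  qed
  have gz: "\<forall>z\<in>ball 0 1. g z = 0"
    using holomorphic_fun_eq_0_on_ball[OF assms(2) _ g0] by blast
  have "(\<lambda>z. h z + 1 * g z) \<in> class_S_R" using mem[of 1] by simp
  then have "h \<in> class_S_R" by (rule S_R_cong[rotated]) (simp add: gz)
  with gz show "(\<forall>z\<in>ball 0 1. g z = 0) \<and> h \<in> class_S_R" by blast
next
  assume A: "(\<forall>z\<in>ball 0 1. g z = 0) \<and> h \<in> class_S_R"
  show "(h, g) \<in> harmonic_analogue class_S_R"
    unfolding harmonic_analogue_def
    using assms A by (auto intro: S_R_cong[of h])
qed

end
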